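(* Suppose $b$ satisfies (H0). For $p\ge3$ define $$\varepsilon_p:=\frac{2}{A_2}|\mathbb S^{N-2}|\int_0^\pi\Big\{\int_0^1t\Big(1-\frac{\sin^2\theta}{2}t\Big)^{p-2}dt\Big\}b(\cos\theta)\sin^N\theta\,d\theta\quad(\le1).$$ Then $\varepsilon_p\to0$ as $p\to\infty$. Furthermore, if either $0<\gamma\le1$ or (H2) holds, then $p^{2-2/\gamma}\varepsilon_p\to0$ as $p\to\infty$.
   Context: $N\ge2$, $b\ge0$ Borel on $[-1,1]$, $0<\gamma\le2$. $|\mathbb S^{N-2}|$ is the surface measure of the unit sphere of $\mathbb R^{N-1}$ ($=2$ if $N=2$). (H0): $A_2:=|\mathbb S^{N-2}|\int_0^\pi b(\cos\theta)\sin^N\theta\,d\theta<\infty$ (and assume $A_2>0$). (H2): $1<\gamma<2$ and $\int_0^\pi b(\cos\theta)\sin^{N-2\nu}\theta\,d\theta<\infty$ with $\nu=2-2/\gamma$. *)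

theory Defs
  imports "HOL-Analysis.Analysis"
begin

text \<open>Surface measure of the unit sphere of R^(N-1), i.e. of S^(N-2):
  2 pi^((N-1)/2) / Gamma((N-1)/2). For N = 2 this equals 2.\<close>
definition sphere_meas :: "nat \<Rightarrow> real" where
  "sphere_meas N = 2 * pi powr ((real N - 1) / 2) / Gamma ((real N - 1) / 2)"

definition A2 :: "nat \<Rightarrow> (real \<Rightarrow> real) \<Rightarrow> real" where
  "A2 N b = sphere_meas N * (LINT \<theta>:{0..pi}|lborel. b (cos \<theta>) * sin \<theta> ^ N)"

definition eps :: "nat \<Rightarrow> (real \<Rightarrow> real) \<Rightarrow> real \<Rightarrow> real" where
  "eps N b p = 2 / A2 N b * sphere_meas N *
     (LINT \<theta>:{0..pi}|lborel.
        (LINT t:{0..1}|lborel. t * (1 - (sin \<theta>)\<^sup>2 / 2 * t) powr (p - 2))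
        * b (cos \<theta>) * sin \<theta> ^ N)"

end

theory Submission imports Defs "HOL-Real_Asymp.Real_Asymp" begin

lemma powr_le_1_plus: assumes "0 \<le> (x::real)" "0 \<le> \<mu>" "\<mu> \<le> 1" shows "x powr \<mu> \<le> 1 + x"
proof (cases "x \<le> 1")
  case True thus ?thesis using assms using powr_le1[of \<mu> x] by simp
next
  case False
  have "x powr \<mu> \<le> x powr 1" using False assms by (intro powr_mono) auto
  thus ?thesis using False by simp
qed

lemma ptw_bound:
  fixes q c t \<mu> :: real
  assumes q: "q > 0" and c: "c > 0" and t: "0 \<le> t" "t \<le> 1" and ct: "c * t < 1"
    and mu: "0 \<le> \<mu>" "\<mu> \<le> 1"
  shows "t * (1 - c * t) powr q \<le> (q * c) powr (-\<mu>)"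
proof (cases "t = 0")
  case True thus ?thesis by simp
next
  case False
  hence tp: "t > 0" using t by simp
  define x where "x = q * c * t"
  have xp: "x > 0" using q c tp by (simp add: x_def)
  have "(1 - c * t) powr q = exp (q * ln (1 - c * t))" using ct by (simp add: powr_def)
  also have "\<dots> \<le> exp (- x)"
  proof -
    have "ln (1 - c*t) \<le> (1 - c*t) - 1" using ct by (intro ln_le_minus_one) simp
    hence "q * ln (1 - c * t) \<le> q * (- (c*t))" using q by (intro mult_left_mono) auto
    thus ?thesis by (simp add: x_def mult.assoc)
  qed
  also have "\<dots> \<le> 1 / (1 + x)"
  proof -
    have "1 + x \<le> exp x" by (rule exp_ge_add_one_self)
    hence "exp (-x) * (1+x) \<le> exp (-x) * exp x" by (intro mult_left_mono) auto
    hence "exp (-x) * (1+x) \<le> 1" by (simp add: exp_minus)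
    thus ?thesis using xp by (simp add: field_simps)
  qed
  also have "\<dots> \<le> x powr (-\<mu>)"
  proof -
    have "x powr \<mu> \<le> 1 + x" using xp mu by (intro powr_le_1_plus) auto
    thus ?thesis using xp by (simp add: powr_minus field_simps)
  qed
  finally have A: "(1 - c * t) powr q \<le> x powr (-\<mu>)" .
  have "t * (1 - c * t) powr q \<le> t * x powr (-\<mu>)" using A tp by (intro mult_left_mono) auto
  also have "t * x powr (-\<mu>) = (q*c) powr (-\<mu>) * (t * t powr (-\<mu>))"
    unfolding x_def using q c tp by (simp add: powr_mult)
  also have "t * t powr (-\<mu>) = t powr (1 - \<mu>)" using tp by (simp add: powr_diff powr_minus field_simps)
  also have "(q*c) powr (-\<mu>) * t powr (1 - \<mu>) \<le> (q*c) powr (-\<mu>) * 1"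
    using t mu by (intro mult_left_mono powr_le1) auto
  finally show ?thesis by simp
qed

definition II :: "real \<Rightarrow> real \<Rightarrow> real" where
 "II p \<theta> = (LINT t:{0..1}|lborel. t * (1 - (sin \<theta>)\<^sup>2 / 2 * t) powr (p - 2))"

lemma II_meas: "(\<lambda>\<theta>. II p \<theta>) \<in> borel_measurable lborel"
  unfolding II_def set_lebesgue_integral_def
  by (rule lborel.borel_measurable_lebesgue_integral) measurable

lemma sin_sq_le: "(sin (\<theta>::real))\<^sup>2 \<le> 1"
  by (simp add: abs_square_le_1)

lemma base_bounds: "(t::real) \<in> {0..1} \<Longrightarrow> 1/2 \<le> 1 - (sin \<theta>)\<^sup>2 / 2 * t \<and> 1 - (sin \<theta>)\<^sup>2 / 2 * t \<le> 1"
proof -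
  assume t: "t \<in> {0..1}"
  have "(sin \<theta>)\<^sup>2 * t \<le> 1" using t sin_sq_le[of \<theta>]
    by (metis atLeastAtMost_iff mult_le_one zero_le_power2)
  thus ?thesis using t by (auto intro!: mult_nonneg_nonneg)
qed

lemma II_integrable: "set_integrable lborel {0..1} (\<lambda>t::real. t * (1 - (sin \<theta>)\<^sup>2 / 2 * t) powr (p - 2))"
proof (rule borel_integrable_atLeastAtMost')
  show "continuous_on {0..1} (\<lambda>t. t * (1 - (sin \<theta>)\<^sup>2 / 2 * t) powr (p - 2))"
  proof (intro continuous_intros ballI)
    fix t :: real assume "t \<in> {0..1}"
    from base_bounds[OF this, of \<theta>] show "1 - (sin \<theta>)\<^sup>2 / 2 * t \<noteq> 0" by linarith
  qed
qed

lemma II_nonneg: "0 \<le> II p \<theta>"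
  unfolding II_def set_lebesgue_integral_def
  by (rule Bochner_Integration.integral_nonneg) (auto simp: indicator_def)

lemma II_bound:
  assumes p: "p > 2" and s: "sin \<theta> \<noteq> 0" and mu: "0 \<le> \<mu>" "\<mu> \<le> 1"
  shows "II p \<theta> \<le> ((p - 2) * ((sin \<theta>)\<^sup>2 / 2)) powr (-\<mu>)"
proof -
  have "II p \<theta> \<le> (LINT t::real:{0..1}|lborel. ((p - 2) * ((sin \<theta>)\<^sup>2 / 2)) powr (-\<mu>))"
    unfolding II_def
  proof (rule set_integral_mono)
    show "set_integrable lborel {0..1} (\<lambda>t::real. t * (1 - (sin \<theta>)\<^sup>2 / 2 * t) powr (p - 2))"
      by (rule II_integrable)
    show "set_integrable lborel {0..1} (\<lambda>t::real. ((p - 2) * ((sin \<theta>)\<^sup>2 / 2)) powr (-\<mu>))"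
      by (rule borel_integrable_atLeastAtMost') (rule continuous_on_const)
    fix t :: real assume t: "t \<in> {0..1}"
    have "(sin \<theta>)\<^sup>2 / 2 * t \<le> 1/2" using base_bounds[OF t, of \<theta>] by linarith
    then show "t * (1 - (sin \<theta>)\<^sup>2 / 2 * t) powr (p - 2) \<le> ((p - 2) * ((sin \<theta>)\<^sup>2 / 2)) powr (-\<mu>)"
      using t p s mu by (intro ptw_bound) auto
  qed
  also have "\<dots> = ((p - 2) * ((sin \<theta>)\<^sup>2 / 2)) powr (-\<mu>)"
    by (subst set_integral_const) auto
  finally show ?thesis .
qed

lemma alg_bound:
  fixes p S \<nu> :: real
  assumes p: "p \<ge> 3" and S: "S > 0" and nu: "0 \<le> \<nu>" "\<nu> \<le> 1"
  shows "p powr \<nu> * ((p - 2) * (S\<^sup>2 / 2)) powr (-\<nu>) * S ^ N \<le> 6 * S powr (real N - 2 * \<nu>)"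
proof -
  have eq: "p powr \<nu> * ((p - 2) * (S\<^sup>2 / 2)) powr (-\<nu>) * S ^ N
      = (2 * p / (p - 2)) powr \<nu> * S powr (real N - 2 * \<nu>)"
  proof -
    have "((p - 2) * (S\<^sup>2 / 2)) powr (-\<nu>) = ((p - 2) / 2) powr (-\<nu>) * (S powr 2) powr (-\<nu>)"
      using p S by (simp add: powr_mult[symmetric] powr_realpow)
    also have "(S powr 2) powr (-\<nu>) = S powr (- 2 * \<nu>)" by (simp add: powr_powr)
    finally have 1: "((p - 2) * (S\<^sup>2 / 2)) powr (-\<nu>) = ((p - 2) / 2) powr (-\<nu>) * S powr (- 2 * \<nu>)" .
    have 2: "S ^ N = S powr (real N)" using S by (simp add: powr_realpow)
    have 3: "p powr \<nu> * ((p - 2) / 2) powr (-\<nu>) = (2 * p / (p - 2)) powr \<nu>"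
      using p by (simp add: powr_minus powr_divide divide_simps powr_mult)
    have 4: "S powr (- 2 * \<nu>) * S powr (real N) = S powr (real N - 2 * \<nu>)"
      by (simp add: powr_add[symmetric])
    show ?thesis unfolding 1 2 using 3 4 by (metis mult.assoc mult.commute)
  qed
  have "(2 * p / (p - 2)) powr \<nu> \<le> (2 * p / (p - 2)) powr 1"
    using p nu by (intro powr_mono) (auto simp: field_simps)
  also have "\<dots> \<le> 6" using p by (simp add: field_simps)
  finally have "(2 * p / (p - 2)) powr \<nu> \<le> 6" .
  thus ?thesis unfolding eq by (intro mult_right_mono) auto
qed

lemma lim_aux:
  fixes \<nu> k :: real assumes "\<nu> < 1" "k > 0"
  shows "((\<lambda>p. p powr \<nu> * ((p - 2) * k) powr (-1)) \<longlongrightarrow> 0) at_top"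
proof -
  have 1: "((\<lambda>p::real. p powr (\<nu> - 1)) \<longlongrightarrow> 0) at_top"
    using assms by (intro tendsto_neg_powr filterlim_ident) auto
  have 2: "((\<lambda>p::real. p / (p - 2) / k) \<longlongrightarrow> 1 / k) at_top"
  proof (rule tendsto_divide[OF _ tendsto_const])
    show "((\<lambda>p::real. p / (p - 2)) \<longlongrightarrow> 1) at_top" by real_asymp
  qed (use assms in auto)
  have "((\<lambda>p::real. p powr (\<nu> - 1) * (p / (p - 2) / k)) \<longlongrightarrow> 0 * (1/k)) at_top"
    by (rule tendsto_mult[OF 1 2])
  moreover have "eventually (\<lambda>p. p powr (\<nu> - 1) * (p / (p - 2) / k) = p powr \<nu> * ((p - 2) * k) powr (-1)) at_top"
    using eventually_gt_at_top[of 2]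
  proof eventually_elim
    case (elim p)
    have "p powr (\<nu> - 1) = p powr \<nu> / p" using elim by (simp add: powr_diff)
    thus ?case using elim assms by (simp add: powr_minus field_simps)
  qed
  ultimately show ?thesis by (simp add: tendsto_cong)
qed

lemma gen:
  fixes b :: "real \<Rightarrow> real" and \<nu> :: real
  assumes nu: "0 \<le> \<nu>" "\<nu> < 1" and N: "N \<ge> 1"
    and b_nonneg: "\<forall>x\<in>{-1..1}. b x \<ge> 0"
    and H0: "set_integrable lborel {0..pi} (\<lambda>\<theta>. b (cos \<theta>) * sin \<theta> ^ N)"
    and H2: "set_integrable lborel {0..pi} (\<lambda>\<theta>. b (cos \<theta>) * sin \<theta> powr (real N - 2 * \<nu>))"
  shows "((\<lambda>p. p powr \<nu> * (LINT \<theta>:{0..pi}|lborel. II p \<theta> * b (cos \<theta>) * sin \<theta> ^ N)) \<longlongrightarrow> 0) at_top"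
proof -
  define F where "F = (\<lambda>\<theta>. indicator {0..pi} \<theta> *\<^sub>R (b (cos \<theta>) * sin \<theta> ^ N))"
  define G where "G = (\<lambda>\<theta>. indicator {0..pi} \<theta> *\<^sub>R (b (cos \<theta>) * sin \<theta> powr (real N - 2 * \<nu>)))"
  define s where "s = (\<lambda>p \<theta>. (p powr \<nu> * II p \<theta>) * F \<theta>)"
  have Fi: "integrable lborel F" using H0 unfolding F_def set_integrable_def .
  have Gi: "integrable lborel G" using H2 unfolding G_def set_integrable_def .
  have Fm: "F \<in> borel_measurable lborel" using Fi by auto
  have bnn: "b (cos \<theta>) \<ge> 0" for \<theta> using b_nonneg by auto
  have eq: "p powr \<nu> * (LINT \<theta>:{0..pi}|lborel. II p \<theta> * b (cos \<theta>) * sin \<theta> ^ N) = integral\<^sup>L lborel (s p)" for p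
    unfolding set_lebesgue_integral_def s_def F_def
    by (subst integral_mult_right_zero[symmetric], rule Bochner_Integration.integral_cong) (auto simp: indicator_def)
  have "((\<lambda>p. integral\<^sup>L lborel (s p)) \<longlongrightarrow> integral\<^sup>L lborel (\<lambda>_::real. 0::real)) at_top"
  proof (rule integral_dominated_convergence_at_top[where w="\<lambda>\<theta>. 6 * G \<theta>"])
    show "(\<lambda>_::real. 0::real) \<in> borel_measurable lborel" by simp
    show "s p \<in> borel_measurable lborel" for p
      unfolding s_def using Fm II_meas[of p] by measurable
    show "integrable lborel (\<lambda>\<theta>. 6 * G \<theta>)" using Gi by simp
    show "AE \<theta> in lborel. ((\<lambda>p. s p \<theta>) \<longlongrightarrow> 0) at_top"
    proof (rule AE_I2)
      fix \<theta> :: real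
      show "((\<lambda>p. s p \<theta>) \<longlongrightarrow> 0) at_top"
      proof (cases "\<theta> \<in> {0..pi} \<and> sin \<theta> \<noteq> 0")
        case False
        hence "F \<theta> = 0" using N unfolding F_def by (auto simp: indicator_def)
        thus ?thesis unfolding s_def by simp
      next
        case True
        define k where "k = (sin \<theta>)\<^sup>2 / 2"
        have k: "k > 0" using True by (simp add: k_def)
        have "((\<lambda>p. p powr \<nu> * II p \<theta>) \<longlongrightarrow> 0) at_top"
        proof (rule tendsto_sandwich[OF _ _ tendsto_const lim_aux[OF nu(2) k]])
          show "\<forall>\<^sub>F p in at_top. 0 \<le> p powr \<nu> * II p \<theta>" by (simp add: II_nonneg)
          show "\<forall>\<^sub>F p in at_top. p powr \<nu> * II p \<theta> \<le> p powr \<nu> * ((p - 2) * k) powr - 1"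
            using eventually_gt_at_top[of 2]
          proof eventually_elim
            case (elim p)
            have "II p \<theta> \<le> ((p - 2) * k) powr - 1"
              unfolding k_def using elim True by (intro II_bound) auto
            thus ?case by (intro mult_left_mono) auto
          qed
        qed
        hence "((\<lambda>p. p powr \<nu> * II p \<theta> * F \<theta>) \<longlongrightarrow> 0 * F \<theta>) at_top"
          by (intro tendsto_mult tendsto_const)
        thus ?thesis unfolding s_def by simp
      qed
    qed
    show "\<forall>\<^sub>F p in at_top. AE \<theta> in lborel. norm (s p \<theta>) \<le> 6 * G \<theta>"
      using eventually_ge_at_top[of 3]
    proof eventually_elim
      case (elim p)
      show ?case
      proof (rule AE_I2)
        fix \<theta> :: real
        show "norm (s p \<theta>) \<le> 6 * G \<theta>"
        proof (cases "\<theta> \<in> {0..pi} \<and> sin \<theta> \<noteq> 0")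
          case False
          hence "F \<theta> = 0" using N unfolding F_def by (auto simp: indicator_def)
          moreover have "G \<theta> \<ge> 0" unfolding G_def using bnn[of \<theta>] by (auto simp: indicator_def)
          ultimately show ?thesis unfolding s_def by simp
        next
          case True
          have S: "sin \<theta> > 0" using True sin_ge_zero[of \<theta>] by auto
          have nn: "0 \<le> p powr \<nu> * II p \<theta> * F \<theta>"
            unfolding F_def using True bnn[of \<theta>] S by (auto intro!: mult_nonneg_nonneg II_nonneg)
          have "p powr \<nu> * II p \<theta> * F \<theta> = p powr \<nu> * II p \<theta> * sin \<theta> ^ N * b (cos \<theta>)"
            using True by (simp add: F_def)
          also have "\<dots> \<le> p powr \<nu> * ((p - 2) * ((sin \<theta>)\<^sup>2 / 2)) powr (-\<nu>) * sin \<theta> ^ N * b (cos \<theta>)"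
            using elim S nu bnn[of \<theta>]
            by (intro mult_right_mono mult_left_mono II_bound) auto
          also have "\<dots> \<le> 6 * sin \<theta> powr (real N - 2 * \<nu>) * b (cos \<theta>)"
            using elim S nu bnn[of \<theta>]
            by (intro mult_right_mono alg_bound) auto
          also have "\<dots> = 6 * G \<theta>" using True by (simp add: G_def)
          finally show ?thesis using nn unfolding s_def by simp
        qed
      qed
    qed
  qed
  thus ?thesis unfolding eq by simp
qed

theorem lemma3p4:
  fixes N :: nat and b :: "real \<Rightarrow> real" and \<gamma> :: real
  assumes N: "N \<ge> 2"
    and b_meas: "set_borel_measurable borel {-1..1} b"
    and b_nonneg: "\<forall>x\<in>{-1..1}. b x \<ge> 0"
    and gamma: "0 < \<gamma>" "\<gamma> \<le> 2"
    and H0: "set_integrable lborel {0..pi} (\<lambda>\<theta>. b (cos \<theta>) * sin \<theta> ^ N)"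
    and A2_pos: "A2 N b > 0"
  shows "((\<lambda>p. eps N b p) \<longlongrightarrow> 0) at_top \<and>
         ((0 < \<gamma> \<and> \<gamma> \<le> 1) \<or>
         (1 < \<gamma> \<and> \<gamma> < 2 \<and>
          set_integrable lborel {0..pi}
            (\<lambda>\<theta>. b (cos \<theta>) * sin \<theta> powr (real N - 2 * (2 - 2 / \<gamma>))))
         \<longrightarrow> ((\<lambda>p. p powr (2 - 2 / \<gamma>) * eps N b p) \<longlongrightarrow> 0) at_top)"
proof -
  define J where "J = (\<lambda>p. LINT \<theta>:{0..pi}|lborel. II p \<theta> * b (cos \<theta>) * sin \<theta> ^ N)"
  define K where "K = 2 / A2 N b * sphere_meas N"
  have epsJ: "eps N b p = K * J p" for p unfolding eps_def K_def J_def II_def by simp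
  have E: "((\<lambda>p. p powr \<nu> * eps N b p) \<longlongrightarrow> 0) at_top"
    if "0 \<le> \<nu>" "\<nu> < 1"
       "set_integrable lborel {0..pi} (\<lambda>\<theta>. b (cos \<theta>) * sin \<theta> powr (real N - 2 * \<nu>))" for \<nu>
  proof -
    have "((\<lambda>p. K * (p powr \<nu> * J p)) \<longlongrightarrow> K * 0) at_top"
      unfolding J_def using that N b_nonneg H0 by (intro tendsto_mult tendsto_const gen) auto
    thus ?thesis by (simp add: epsJ mult_ac)
  qed
  have H0': "set_integrable lborel {0..pi} (\<lambda>\<theta>. b (cos \<theta>) * sin \<theta> powr (real N - 2 * 0))"
  proof -
    have "set_integrable lborel {0..pi} (\<lambda>\<theta>. b (cos \<theta>) * sin \<theta> powr (real N - 2 * 0))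
        = set_integrable lborel {0..pi} (\<lambda>\<theta>. b (cos \<theta>) * sin \<theta> ^ N)"
    proof (rule set_integrable_cong)
      fix \<theta> :: real assume "\<theta> \<in> {0..pi}"
      hence "sin \<theta> \<ge> 0" by (intro sin_ge_zero) auto
      thus "b (cos \<theta>) * sin \<theta> powr (real N - 2 * 0) = b (cos \<theta>) * sin \<theta> ^ N"
        using N by (simp add: powr_realpow')
    qed auto
    thus ?thesis using H0 by simp
  qed
  have first: "((\<lambda>p. eps N b p) \<longlongrightarrow> 0) at_top"
  proof -
    have "((\<lambda>p. p powr 0 * eps N b p) \<longlongrightarrow> 0) at_top" by (rule E[OF _ _ H0']) auto
    moreover have "eventually (\<lambda>p. p powr 0 * eps N b p = eps N b p) at_top"
      using eventually_gt_at_top[of 0] by eventually_elim auto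
    ultimately show ?thesis by (rule Lim_transform_eventually)
  qed
  have second: "((\<lambda>p. p powr (2 - 2 / \<gamma>) * eps N b p) \<longlongrightarrow> 0) at_top"
    if H: "(0 < \<gamma> \<and> \<gamma> \<le> 1) \<or>
         (1 < \<gamma> \<and> \<gamma> < 2 \<and>
          set_integrable lborel {0..pi}
            (\<lambda>\<theta>. b (cos \<theta>) * sin \<theta> powr (real N - 2 * (2 - 2 / \<gamma>))))"
  proof (cases "\<gamma> < 1")
    case True
    have "2 / \<gamma> > 2" using True gamma by (simp add: field_simps)
    hence "((\<lambda>p::real. p powr (2 - 2 / \<gamma>)) \<longlongrightarrow> 0) at_top"
      by (intro tendsto_neg_powr filterlim_ident) auto
    from tendsto_mult[OF this first] show ?thesis by simp
  next
    case False
    show ?thesis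
    proof (cases "\<gamma> = 1")
      case True
      hence "2 - 2 / \<gamma> = 0" by simp
      thus ?thesis using E[OF _ _ H0'] by simp
    next
      case False2: False
      hence g: "1 < \<gamma> \<and> \<gamma> < 2" and Hi: "set_integrable lborel {0..pi}
            (\<lambda>\<theta>. b (cos \<theta>) * sin \<theta> powr (real N - 2 * (2 - 2 / \<gamma>)))"
        using H False by auto
      have "2 / \<gamma> > 1" "2 / \<gamma> < 2" using g by (auto simp: field_simps)
      thus ?thesis by (intro E Hi) auto
    qed
  qed
  show ?thesis using first second by blast
qed

end
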